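(* Let $n\ge2$ be an integer, $\sigma\ge0$, $R'>0$, and define $a_1=\frac{n}{2R'}$, $a_2=\frac{a_1}{n-1}$, $a_k=\min\big\{(1+\frac1{n-1})a_{k-1},\frac{\sqrt{n(n+\sigma A_{k-1})}}{2R'}\big\}$ for $k\ge3$, where $A_k=\sum_{i=1}^ka_i$. Let $k_0=\big\lceil\frac{\log B_{n,\sigma,R'}}{\log n-\log(n-1)}\big\rceil$ with $B_{n,\sigma,R'}=\frac{\sigma n(n-1)}{4R'}+\sqrt{(\frac{\sigma n(n-1)}{4R'})^2+n^2}$. Then for all $k>k_0$, $A_k\ge c(k-k_0+n-1)^2$, where $c=\frac{(n-1)^2\sigma}{(4R')^2n}$. *)

theory Defs
  imports Complex_Main
begin

text \<open>acc n \<sigma> R k = (a_(k+1), A_(k+1)), computing the sequence a_k together with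
  its partial sums A_k, as in the paper.\<close>
primrec acc :: "nat \<Rightarrow> real \<Rightarrow> real \<Rightarrow> nat \<Rightarrow> real \<times> real" where
  "acc n \<sigma> R 0 = (real n / (2 * R), real n / (2 * R))"
| "acc n \<sigma> R (Suc k) =
     (let ak = fst (acc n \<sigma> R k); Ak = snd (acc n \<sigma> R k);
          a' = (if k = 0 then ak / (real n - 1)
                else min ((1 + 1 / (real n - 1)) * ak)
                         (sqrt (real n * (real n + \<sigma> * Ak)) / (2 * R)))
      in (a', Ak + a'))"

text \<open>The sequence a_k (k \<ge> 1); a_0 is unused and set to 0.\<close>
definition seq_a :: "nat \<Rightarrow> real \<Rightarrow> real \<Rightarrow> nat \<Rightarrow> real" where
  "seq_a n \<sigma> R k = (if k = 0 then 0 else fst (acc n \<sigma> R (k - 1)))"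

definition seq_A :: "nat \<Rightarrow> real \<Rightarrow> real \<Rightarrow> nat \<Rightarrow> real" where
  "seq_A n \<sigma> R k = (\<Sum>i\<in>{1..k}. seq_a n \<sigma> R i)"

definition B_const :: "nat \<Rightarrow> real \<Rightarrow> real \<Rightarrow> real" where
  "B_const n \<sigma> R = \<sigma> * real n * (real n - 1) / (4 * R)
     + sqrt ((\<sigma> * real n * (real n - 1) / (4 * R))^2 + (real n)^2)"

definition k0_const :: "nat \<Rightarrow> real \<Rightarrow> real \<Rightarrow> int" where
  "k0_const n \<sigma> R = \<lceil>ln (B_const n \<sigma> R) / (ln (real n) - ln (real n - 1))\<rceil>"

definition c_const :: "nat \<Rightarrow> real \<Rightarrow> real \<Rightarrow> real" where
  "c_const n \<sigma> R = (real n - 1)^2 * \<sigma> / ((4 * R)^2 * real n)"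

end

theory Submission
  imports Defs
begin

lemma fact_alg: "(B::real)^2 = 2 * s * B + m^2 \<Longrightarrow> x^2 - 2 * s * x - m^2 = (x - B) * (x + B - 2 * s)"
  by (simp add: power2_eq_square algebra_simps)

lemma B_sq_gen: "((s::real) + sqrt (s^2 + m^2))^2 = 2 * s * (s + sqrt (s^2 + m^2)) + m^2"
proof -
  have "(sqrt (s^2 + m^2))^2 = s^2 + m^2" by simp
  then show ?thesis by (simp add: power2_eq_square algebra_simps)
qed

lemma half_le: "2 * (x::real) \<le> b \<Longrightarrow> x > 0 \<Longrightarrow> x / 2 \<le> b" by linarith

lemma gen_div: "(d::real) * (s/2) \<le> d * b \<Longrightarrow> R > 0 \<Longrightarrow> d * s / (4*R) \<le> d * b / (2*R)"
proof -
  assume a: "d * (s/2) \<le> d * b" "R > 0"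
  have "d * s / (4*R) = d * (s/2) / (2*R)" by simp
  also have "\<dots> \<le> d * b / (2*R)" using a by (intro divide_right_mono) auto
  finally show ?thesis .
qed

lemma fin_alg:
  fixes N \<sigma> R m A a :: real
  assumes "N \<ge> 2" "\<sigma> \<ge> 0" "R > 0" "m \<ge> N"
    and "A \<ge> (N - 1)^2 * \<sigma> / ((4 * R)^2 * N) * m^2"
    and "a \<ge> (N - 1) * \<sigma> * m / (4 * R) / (2 * R)"
  shows "A + a \<ge> (N - 1)^2 * \<sigma> / ((4 * R)^2 * N) * (m + 1)^2"
proof -
  have id: "(N - 1)^2 * \<sigma> / ((4 * R)^2 * N) * m^2 + (N - 1) * \<sigma> * m / (4 * R) / (2 * R)
     - (N - 1)^2 * \<sigma> / ((4 * R)^2 * N) * (m + 1)^2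
     = (N - 1) * \<sigma> / (16 * R^2 * N) * (2 * m - N + 1)"
    using assms(1,3) by (simp add: field_simps power2_eq_square)
  have "(N - 1) * \<sigma> / (16 * R^2 * N) * (2 * m - N + 1) \<ge> 0"
    using assms(1-4) by (intro mult_nonneg_nonneg divide_nonneg_pos) auto
  then show ?thesis using id assms(5,6) by linarith
qed

lemma sqrt_alg:
  fixes N \<sigma> R m A :: real
  assumes "N \<ge> 2" "\<sigma> \<ge> 0" "R > 0" "m \<ge> 0"
    and "A \<ge> (N - 1)^2 * \<sigma> / ((4 * R)^2 * N) * m^2"
  shows "sqrt (N * (N + \<sigma> * A)) / (2 * R) \<ge> (N - 1) * \<sigma> * m / (4 * R) / (2 * R)"
proof -
  have e: "((N - 1) * \<sigma> * m / (4 * R))^2 = N * \<sigma> * ((N - 1)^2 * \<sigma> / ((4 * R)^2 * N) * m^2)"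
    using assms(1,3) by (simp add: field_simps power2_eq_square)
  have "N * \<sigma> * ((N - 1)^2 * \<sigma> / ((4 * R)^2 * N) * m^2) \<le> N * \<sigma> * A"
    using assms by (intro mult_left_mono) auto
  also have "\<dots> \<le> N * (N + \<sigma> * A)" using assms(1) by (simp add: algebra_simps)
  finally have "((N - 1) * \<sigma> * m / (4 * R))^2 \<le> N * (N + \<sigma> * A)" using e by simp
  then have "(N - 1) * \<sigma> * m / (4 * R) \<le> sqrt (N * (N + \<sigma> * A))" by (rule real_le_rsqrt)
  then show ?thesis using assms(3) by (intro divide_right_mono) auto
qed

context
  fixes n :: nat and \<sigma> R :: real
  assumes n2: "n \<ge> 2" and sg: "\<sigma> \<ge> 0" and Rp: "R > 0"
begin

abbreviation "aa \<equiv> seq_a n \<sigma> R"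
abbreviation "AA \<equiv> seq_A n \<sigma> R"
abbreviation "rr \<equiv> real n / (real n - 1)"
abbreviation "ss \<equiv> \<sigma> * real n * (real n - 1) / (4 * R)"
abbreviation "BB \<equiv> B_const n \<sigma> R"

lemma A_Suc: "AA (Suc k) = AA k + aa (Suc k)"
  unfolding seq_A_def by simp

lemma A_0: "AA 0 = 0" unfolding seq_A_def by simp

lemma snd_acc: "snd (acc n \<sigma> R k) = AA (Suc k)"
proof (induction k)
  case 0
  then show ?case by (simp add: A_Suc A_0 seq_a_def)
next
  case (Suc k)
  have "snd (acc n \<sigma> R (Suc k)) = snd (acc n \<sigma> R k) + fst (acc n \<sigma> R (Suc k))"
    by (simp add: Let_def)
  also have "fst (acc n \<sigma> R (Suc k)) = aa (Suc (Suc k))" by (simp add: seq_a_def)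
  finally show ?case using Suc by (simp add: A_Suc[of "Suc k"])
qed

lemma a1: "aa 1 = real n / (2 * R)" by (simp add: seq_a_def)
lemma a2: "aa 2 = real n / (2 * R) / (real n - 1)" by (simp add: seq_a_def numeral_2_eq_2 Let_def)

lemma a_rec: assumes "k \<ge> 2"
  shows "aa (Suc k) = min (rr * aa k) (sqrt (real n * (real n + \<sigma> * AA k)) / (2 * R))"
proof -
  obtain j where j: "k = Suc j" "j \<noteq> 0" using assms by (cases k) auto
  have e: "1 + 1 / (real n - 1) = rr" using n2 by (simp add: field_simps)
  have "aa (Suc k) = fst (acc n \<sigma> R (Suc j))" using j by (simp add: seq_a_def)
  also have "\<dots> = min ((1 + 1 / (real n - 1)) * fst (acc n \<sigma> R j))
                         (sqrt (real n * (real n + \<sigma> * snd (acc n \<sigma> R j))) / (2 * R))"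
    using j by (simp add: Let_def)
  also have "fst (acc n \<sigma> R j) = aa k" using j by (simp add: seq_a_def)
  also have "snd (acc n \<sigma> R j) = AA k" using j by (simp add: snd_acc)
  finally show ?thesis using e by simp
qed

lemma a_nonneg: "aa k \<ge> 0"
proof (induction k rule: less_induct)
  case (less k)
  show ?case
  proof (cases "k \<le> 2")
    case True
    then have "k = 0 \<or> k = 1 \<or> k = 2" by auto
    moreover have "aa 2 \<ge> 0" unfolding a2 using n2 Rp by simp
    ultimately show ?thesis using n2 Rp
      by (auto simp: a1 seq_a_def)
  next
    case False
    then obtain j where j: "k = Suc j" "j \<ge> 2" by (cases k) auto
    have "aa j \<ge> 0" using less j by simp
    moreover have "rr \<ge> 0" using n2 by simp
    moreover have "real n - 1 > 0" using n2 by simp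
    moreover have "AA j \<ge> 0" unfolding seq_A_def using less j by (intro sum_nonneg) simp
    moreover have "sqrt (real n * (real n + \<sigma> * AA j)) \<ge> 0" using calculation sg by simp
    ultimately show ?thesis using j a_rec[of j] Rp by simp
  qed
qed

lemma A_nonneg: "AA k \<ge> 0"
  unfolding seq_A_def using a_nonneg by (simp add: sum_nonneg)

lemma B_def': "BB = ss + sqrt (ss^2 + (real n)^2)" by (simp add: B_const_def)

lemma ss_nonneg: "ss \<ge> 0" using n2 sg Rp by simp

lemma sqrt_gt: "sqrt (ss^2 + (real n)^2) > ss"
proof -
  have "sqrt (ss^2 + (real n)^2) > sqrt (ss^2)"
    using n2 by (intro real_sqrt_less_mono) simp
  then show ?thesis using ss_nonneg by (simp only: real_sqrt_abs)
qed

lemma B_sq: "BB^2 = 2 * ss * BB + (real n)^2"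
  unfolding B_def' by (rule B_sq_gen)

lemma B_ge_n: "BB \<ge> real n"
proof -
  have "sqrt (ss^2 + (real n)^2) \<ge> sqrt ((real n)^2)"
    by (intro real_sqrt_le_mono) simp
  then have "sqrt (ss^2 + (real n)^2) \<ge> real n" by simp
  then show ?thesis unfolding B_def' using ss_nonneg by linarith
qed

lemma B_ge_2s: "BB \<ge> 2 * ss" unfolding B_def' using sqrt_gt by simp

lemma le_B_iff: assumes "x \<ge> 0" shows "x \<le> BB \<longleftrightarrow> x^2 \<le> (real n)^2 + 2 * ss * x"
proof -
  have f: "x^2 - 2 * ss * x - (real n)^2 = (x - BB) * (x + BB - 2 * ss)"
    using fact_alg[OF B_sq] .
  have p: "x + BB - 2 * ss > 0" unfolding B_def' using sqrt_gt assms by simp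
  have "x \<le> BB \<longleftrightarrow> (x - BB) * (x + BB - 2 * ss) \<le> 0"
    using p by (simp add: mult_le_0_iff)
  also have "\<dots> \<longleftrightarrow> x^2 \<le> (real n)^2 + 2 * ss * x" using f by linarith
  finally show ?thesis .
qed


lemma alg2: "(N::real) - 1 > 0 \<Longrightarrow> R > 0 \<Longrightarrow> N / (2*R) + N / (2*R) / (N - 1) = (N - 1) * (N / (N - 1))^2 / (2*R)"
proof -
  assume a: "N - 1 > 0" "R > 0"
  define d where "d = N - 1"
  have N: "N = d + 1" unfolding d_def by simp
  have "d > 0" using a unfolding d_def by simp
  then show ?thesis unfolding N using a by (simp add: field_simps power2_eq_square)
qed

lemma real_sqrt_abs': "(y::real) \<ge> 0 \<Longrightarrow> sqrt (y^2) = y" by simp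

lemma alg3: "(N::real) - 1 > 0 \<Longrightarrow> u^2 + u * u * (2 * N - 1) / (N - 1)^2 = (N / (N - 1) * u)^2"
proof -
  assume a: "N - 1 > 0"
  define d where "d = N - 1"
  have N: "N = d + 1" unfolding d_def by simp
  have "d > 0" using a unfolding d_def by simp
  then show ?thesis unfolding N by (simp add: field_simps power2_eq_square)
qed

definition "Pinv k \<longleftrightarrow>
  (rr^(k-1) \<le> BB \<and> aa k = rr^(k-1) / (2*R) \<and> AA k = (real n - 1) * rr^k / (2*R)) \<or>
  (rr^(k-1) > BB \<and> aa k = sqrt (real n * (real n + \<sigma> * AA (k-1))) / (2*R) \<and> BB \<le> 2*R*aa k)"

lemma rr_ge1: "rr \<ge> 1" using n2 by simp

lemma inv_base: "Pinv 2"
proof -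
  have N1: "real n - 1 > 0" using n2 by simp
  have "rr \<le> 2" using n2 by (simp add: field_simps)
  then have "rr^(2-1) \<le> BB" using B_ge_n n2 by simp
  moreover have "aa 2 = rr^(2-1) / (2*R)" unfolding a2 using N1 Rp by (simp add: field_simps)
  moreover have "AA 2 = (real n - 1) * rr^2 / (2*R)"
  proof -
    have "AA 2 = aa 1 + aa 2" using A_Suc[of 0] A_Suc[of 1] A_0 by (simp add: numeral_2_eq_2)
    also have "\<dots> = (real n - 1) * rr^2 / (2*R)" unfolding a1 a2 using N1 Rp
      by (rule alg2)
    finally show ?thesis .
  qed
  ultimately show ?thesis unfolding Pinv_def by blast
qed

lemma inv_step: assumes k2: "k \<ge> 2" and P: "Pinv k" shows "Pinv (Suc k)"
proof -
  have N1: "real n - 1 > 0" using n2 by simp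
  define sq where "sq = sqrt (real n * (real n + \<sigma> * AA k)) / (2*R)"
  have rec: "aa (Suc k) = min (rr * aa k) sq" unfolding sq_def using a_rec[OF k2] .
  have rk: "rr^k = rr * rr^(k-1)" using k2 by (cases k) auto
  have sk: "Suc k - 1 = k" by simp
  show ?thesis
  proof (cases "rr^(k-1) \<le> BB \<and> aa k = rr^(k-1) / (2*R) \<and> AA k = (real n - 1) * rr^k / (2*R)")
    case True
    define x where "x = rr^k"
    have x0: "x \<ge> 0" unfolding x_def using n2 by simp
    have "aa k = rr^(k-1) / (2*R)" using True by blast
    then have "rr * aa k = (rr * rr^(k-1)) / (2*R)" by (simp only: times_divide_eq_right)
    then have hx: "rr * aa k = x / (2*R)" unfolding x_def rk .
    have eqA: "AA k = (real n - 1) * x / (2*R)" unfolding x_def using True by blast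
    have hA: "real n * (real n + \<sigma> * AA k) = (real n)^2 + 2 * ss * x"
      unfolding eqA using Rp by (simp add: field_simps power2_eq_square)
    show ?thesis
    proof (cases "x \<le> BB")
      case True2: True
      have "x^2 \<le> (real n)^2 + 2 * ss * x" using le_B_iff[OF x0] True2 by simp
      then have "x \<le> sqrt ((real n)^2 + 2 * ss * x)" by (rule real_le_rsqrt)
      then have "x / (2*R) \<le> sq" unfolding sq_def hA using Rp by (simp add: divide_right_mono)
      then have ea: "aa (Suc k) = x / (2*R)" using rec hx by simp
      have eA: "AA (Suc k) = (real n - 1) * rr^(Suc k) / (2*R)"
        unfolding A_Suc ea using True N1 Rp unfolding x_def by (simp add: field_simps)
      show ?thesis unfolding Pinv_def sk using ea eA True2 unfolding x_def by simp
    next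
      case False2: False
      then have "\<not> x^2 \<le> (real n)^2 + 2 * ss * x" using le_B_iff[OF x0] by simp
      then have "(real n)^2 + 2 * ss * x < x^2" by simp
      then have "sqrt ((real n)^2 + 2 * ss * x) < sqrt (x^2)" by (rule real_sqrt_less_mono)
      then have "sqrt ((real n)^2 + 2 * ss * x) < x" using x0 by simp
      then have "sq < x / (2*R)" unfolding sq_def hA using Rp by (simp add: divide_strict_right_mono)
      then have ea: "aa (Suc k) = sq" using rec hx by simp
      have "BB = sqrt (BB^2)" using B_ge_n by simp
      also have "\<dots> = sqrt ((real n)^2 + 2 * ss * BB)" using B_sq by (simp add: algebra_simps)
      also have "\<dots> \<le> sqrt ((real n)^2 + 2 * ss * x)"
      proof -
        have "ss * BB \<le> ss * x" using False2 ss_nonneg by (intro mult_left_mono) auto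
        then show ?thesis by (intro real_sqrt_le_mono) linarith
      qed
      also have "\<dots> = 2*R*aa (Suc k)" unfolding ea sq_def hA using Rp by simp
      finally have "BB \<le> 2*R*aa (Suc k)" .
      then show ?thesis unfolding Pinv_def sk using ea False2 unfolding x_def sq_def by simp
    qed
  next
    case False
    then have F: "rr^(k-1) > BB" "aa k = sqrt (real n * (real n + \<sigma> * AA (k-1))) / (2*R)"
       "BB \<le> 2*R*aa k" using P unfolding Pinv_def by auto
    have y0: "rr^(k-1) \<ge> 0" using n2 by simp
    have "1 * rr^(k-1) \<le> rr * rr^(k-1)" by (rule mult_right_mono[OF rr_ge1 y0])
    then have "rr^(k-1) \<le> rr^k" unfolding rk by simp
    then have rkB: "rr^k > BB" using F(1) by simp
    define u where "u = 2*R*aa k"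
    have uB: "u \<ge> BB" using F(3) unfolding u_def .
    have u2s: "u \<ge> 2 * ss" using uB B_ge_2s by simp
    have u0: "u \<ge> 0" using u2s ss_nonneg by simp
    have arg0: "real n * (real n + \<sigma> * AA (k-1)) \<ge> 0" using A_nonneg sg by simp
    have "u = sqrt (real n * (real n + \<sigma> * AA (k-1)))" unfolding u_def F(2) using Rp by simp
    then have usq: "u^2 = real n * (real n + \<sigma> * AA (k-1))" using arg0 by simp
    have Ak: "AA k = AA (k-1) + aa k" using A_Suc[of "k-1"] k2 by simp
    have ak: "aa k = u / (2*R)" unfolding u_def using Rp by simp
    have harg: "real n * (real n + \<sigma> * AA k) = u^2 + 2 * ss * u / (real n - 1)"
      unfolding usq Ak ak using Rp N1 by (simp add: field_simps)
    have "2 * ss * u * (real n - 1) \<le> u * u * (real n - 1)"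
      using u2s u0 N1 by (intro mult_right_mono mult_right_mono) (auto intro: mult_right_mono)
    also have "\<dots> \<le> u * u * (2 * real n - 1)" using u0 by (intro mult_left_mono) auto
    finally have i1: "2 * ss * u * (real n - 1) \<le> u * u * (2 * real n - 1)" .
    have "2 * ss * u / (real n - 1) = 2 * ss * u * (real n - 1) / (real n - 1)^2"
      using N1 by (simp add: power2_eq_square)
    also have "\<dots> \<le> u * u * (2 * real n - 1) / (real n - 1)^2"
      using i1 by (intro divide_right_mono) auto
    also have "u^2 + \<dots> = (rr * u)^2" using N1 by (rule alg3)
    finally have "real n * (real n + \<sigma> * AA k) \<le> (rr * u)^2" unfolding harg by simp
    then have "sqrt (real n * (real n + \<sigma> * AA k)) \<le> sqrt ((rr * u)^2)" by (rule real_sqrt_le_mono)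
    also have "\<dots> = rr * u"
    proof -
      have "rr * u \<ge> 0" using mult_nonneg_nonneg[OF _ u0, of rr] rr_ge1 by linarith
      then show ?thesis by (rule real_sqrt_abs') 
    qed
    finally have "sqrt (real n * (real n + \<sigma> * AA k)) / (2*R) \<le> (rr * u) / (2*R)"
      using Rp by (intro divide_right_mono) auto
    then have "sq \<le> rr * aa k" unfolding sq_def ak by (simp only: times_divide_eq_right)
    then have ea: "aa (Suc k) = sq" using rec by simp
    have "BB \<le> u" by (rule uB)
    also have "u = sqrt (u^2)" using u0 by simp
    also have "\<dots> \<le> sqrt (u^2 + 2 * ss * u / (real n - 1))"
      using ss_nonneg u0 N1 sg Rp by (intro real_sqrt_le_mono) simp
    also have "\<dots> = 2*R*aa (Suc k)" unfolding ea sq_def harg[symmetric] using Rp by simp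
    finally have "BB \<le> 2*R*aa (Suc k)" .
    then show ?thesis unfolding Pinv_def sk using ea rkB unfolding sq_def by simp
  qed
qed

lemma inv_all: "k \<ge> 2 \<Longrightarrow> Pinv k"
proof (induction k rule: dec_induct)
  case base
  then show ?case by (rule inv_base)
next
  case (step m)
  then show ?case using inv_step by simp
qed


lemma main_pos:
  assumes sp: "\<sigma> > 0" and kk: "int k > k0_const n \<sigma> R"
  shows "AA k \<ge> c_const n \<sigma> R * (real_of_int (int k - k0_const n \<sigma> R) + real n - 1)^2"
proof -
  have N1: "real n - 1 > 0" using n2 by simp
  have ssp: "ss > 0" using sp n2 Rp by simp
  have "sqrt (ss^2 + (real n)^2) \<ge> sqrt ((real n)^2)" by (intro real_sqrt_le_mono) simp
  then have "sqrt (ss^2 + (real n)^2) \<ge> real n" by simp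
  then have Bn: "BB > real n" unfolding B_def' using ssp by linarith
  have rr1: "rr > 1" using n2 by simp
  have rr2: "rr \<le> 2" using n2 by (simp add: field_simps)
  have lnr: "ln (real n) - ln (real n - 1) = ln rr" using N1 by (simp add: ln_div)
  have lnr0: "ln rr > 0" using rr1 by simp
  have Bpos: "BB > 0" using Bn n2 by simp
  have "ln rr < ln BB" using rr2 Bn n2 rr1 by (subst ln_less_cancel_iff) auto
  define q where "q = ln BB / ln rr"
  have q1: "q > 1" unfolding q_def using lnr0 \<open>ln rr < ln BB\<close> by simp
  have k0q: "k0_const n \<sigma> R = \<lceil>q\<rceil>" unfolding k0_const_def q_def lnr ..
  have cq: "of_int \<lceil>q\<rceil> - 1 < q" "q \<le> of_int \<lceil>q\<rceil>" using ceiling_correct[of q] by auto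
  define K where "K = nat \<lceil>q\<rceil>"
  have Kge: "\<lceil>q\<rceil> \<ge> 2" using q1 cq by linarith
  have rK: "real K = of_int \<lceil>q\<rceil>" unfolding K_def using Kge by simp
  have K2: "K \<ge> 2" unfolding K_def using Kge by linarith
  have "real (K - 1) < q" using rK cq K2 by (simp add: of_nat_diff)
  then have "real (K - 1) * ln rr < ln BB" unfolding q_def using lnr0 by (simp add: field_simps)
  then have "ln (rr^(K-1)) < ln BB" using rr1 by (simp add: ln_realpow)
  then have lowK: "rr^(K-1) < BB" using rr1 Bpos by (subst (asm) ln_less_cancel_iff) auto
  have "q \<le> real K" using rK cq by simp
  then have "ln BB \<le> real K * ln rr" unfolding q_def using lnr0 by (simp add: field_simps)
  then have "ln BB \<le> ln (rr^K)" using rr1 by (simp add: ln_realpow)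
  then have highK: "BB \<le> rr^K" using rr1 Bpos by (subst (asm) ln_le_cancel_iff) auto
  have AK: "AA K = (real n - 1) * rr^K / (2*R)" using inv_all[OF K2] lowK unfolding Pinv_def by auto
  define c where "c = (real n - 1)^2 * \<sigma> / ((4 * R)^2 * real n)"
  have cdef: "c_const n \<sigma> R = c" unfolding c_def c_const_def ..
  have claim: "AA (K + j) \<ge> c * (real j + real n - 1)^2" if "j \<ge> 1" for j
    using that
  proof (induction j rule: dec_induct)
    case base
    have "c * (real 1 + real n - 1)^2 = (real n - 1) * ss / (4 * R)"
      unfolding c_def using n2 Rp by (simp add: field_simps power2_eq_square)
    also have "\<dots> \<le> (real n - 1) * BB / (2 * R)"
    proof -
      have "ss / 2 \<le> BB" using half_le[OF B_ge_2s ssp] .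
      then have "(real n - 1) * (ss / 2) \<le> (real n - 1) * BB" using N1 by (intro mult_left_mono) auto
      then show ?thesis using Rp by (rule gen_div)
    qed
    also have "\<dots> \<le> AA K" unfolding AK using highK N1 Rp
      by (intro divide_right_mono mult_left_mono) auto
    also have "\<dots> \<le> AA (K + 1)" using A_Suc[of K] a_nonneg[of "Suc K"] by simp
    finally show ?case .
  next
    case (step j)
    have "rr^(K+1) \<le> rr^(K+j)" using step rr1 by (intro power_increasing) auto
    moreover have "rr^K < rr^(K+1)" using rr1 by (intro power_strict_increasing) auto
    ultimately have big: "rr^(Suc (K+j) - 1) > BB" using highK by simp
    have "Pinv (Suc (K + j))" using K2 by (intro inv_all) simp
    then have ea: "aa (Suc (K+j)) = sqrt (real n * (real n + \<sigma> * AA (K+j))) / (2*R)"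
      using big unfolding Pinv_def by auto
    have ih: "AA (K + j) \<ge> (real n - 1)^2 * \<sigma> / ((4 * R)^2 * real n) * (real j + real n - 1)^2"
      using step.IH unfolding c_def .
    have "AA (K + j) + aa (Suc (K+j)) \<ge>
        (real n - 1)^2 * \<sigma> / ((4 * R)^2 * real n) * ((real j + real n - 1) + 1)^2"
      unfolding ea using n2 sg Rp step.hyps ih
      by (intro fin_alg sqrt_alg) auto
    then show ?case unfolding c_def using A_Suc[of "K+j"] by (simp add: add_ac)
  qed
  have kK: "k > K" using kk k0q rK unfolding K_def by linarith
  define j where "j = k - K"
  have kj: "k = K + j" "j \<ge> 1" unfolding j_def using kK by auto
  have "int k - k0_const n \<sigma> R = int j" using kj(1) k0q Kge unfolding K_def by linarith
  then have "real_of_int (int k - k0_const n \<sigma> R) = real j" by simp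
  then show ?thesis unfolding cdef using claim[OF kj(2)] kj(1) by simp
qed

end
theorem proposition3:
  fixes n :: nat and \<sigma> R :: real and k :: nat
  assumes "n \<ge> 2" and "\<sigma> \<ge> 0" and "R > 0"
    and "int k > k0_const n \<sigma> R"
  shows "seq_A n \<sigma> R k \<ge>
           c_const n \<sigma> R * (real_of_int (int k - k0_const n \<sigma> R) + real n - 1)^2"
proof (cases "\<sigma> = 0")
  case True
  then show ?thesis using A_nonneg[OF assms(1,2,3)] by (simp add: c_const_def)
next
  case False
  then have "\<sigma> > 0" using assms(2) by simp
  then show ?thesis using main_pos[OF assms(1,2,3)] assms(4) by blast
qed

end
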